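(* Let $(\alpha^{(n)},\omega^{(n)},\beta^{(n)})$ be a sequence of feasible endpoint constraints converging componentwise to a feasible constraint $(\alpha,\omega,\beta)$ with $0<\beta<\infty$. Then $$\liminf_{n\to\infty}\mathcal{J}(\alpha^{(n)},\omega^{(n)},\beta^{(n)})\ge\mathcal{J}(\alpha,\omega,\beta).$$
   Context: Fix $I\ge0$. $S_I=\{\gamma\in\mathbb{R}^{I+2}:\gamma_j\ge0,\sum\gamma_j=1\}$. An endpoint constraint is $(\alpha,\omega,\beta)$ with $\alpha,\omega\in S_I$ (components $\alpha_0,\dots,\alpha_{I+1}$ with $\alpha_0>0$, and $\omega_0,\dots,\omega_I,\omega_{I+}$), $\beta>0$; it is feasible iff $\sum_{j\le i}\alpha_j\ge\sum_{j\le i}\omega_j$ ($i=0,\dots,I$) and $\sum_{i=0}^Ii\omega_i+(I+1)\omega_{I+}\le\sum_{k=0}^{I+1}k\alpha_k+\beta$. With $\mathcal{K}=\{k:\alpha_k>0\}$, $\mathcal{J}(\alpha,\omega,\beta)$ is the minimum of $\sum_{k\in\mathcal{K}}\alpha_kD(\pi_{(k)}\|\mathcal{P}(\beta))$ over tuples $(\pi_{(k)})_{k\in\mathcal{K}}$ of probability distributions on the nonnegative integers satisfying $\sum_{k\in\mathcal{K}}\alpha_k\sum_jj\pi_{k,j}=\beta$ and $\omega_i=\sum_{k\le i,k\in\mathcal{K}}\alpha_k\pi_{k,i-k}$ for $0\le i\le I$, if $(\alpha,\omega,\beta)$ is feasible, and $\infty$ otherwise. $\mathcal{P}(\beta)$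 is the Poisson distribution with mean $\beta$ and $D$ is relative entropy. *)

theory Defs
  imports "HOL-Analysis.Analysis"
begin

text \<open>Vectors in R^{I+2} are represented as functions nat => real; only the
  components with index 0..I+1 matter. For omega, index I+1 is omega_{I+}.\<close>

definition simplexI :: "nat \<Rightarrow> (nat \<Rightarrow> real) \<Rightarrow> bool" where
  "simplexI I g \<longleftrightarrow> (\<forall>j\<le>I+1. g j \<ge> 0) \<and> (\<Sum>j\<le>I+1. g j) = 1"

definition feasible :: "nat \<Rightarrow> (nat \<Rightarrow> real) \<Rightarrow> (nat \<Rightarrow> real) \<Rightarrow> real \<Rightarrow> bool" where
  "feasible I \<alpha> \<omega> \<beta> \<longleftrightarrow>
     simplexI I \<alpha> \<and> simplexI I \<omega> \<and> \<alpha> 0 > 0 \<and> \<beta> > 0 \<and>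
     (\<forall>i\<le>I. (\<Sum>j\<le>i. \<alpha> j) \<ge> (\<Sum>j\<le>i. \<omega> j)) \<and>
     (\<Sum>i\<le>I. real i * \<omega> i) + real (I+1) * \<omega> (I+1)
        \<le> (\<Sum>k\<le>I+1. real k * \<alpha> k) + \<beta>"

definition poisson :: "real \<Rightarrow> nat \<Rightarrow> real" where
  "poisson \<beta> j = exp (- \<beta>) * \<beta> ^ j / fact j"

definition prob_dist :: "(nat \<Rightarrow> real) \<Rightarrow> bool" where
  "prob_dist p \<longleftrightarrow> (\<forall>j. p j \<ge> 0) \<and> p sums 1"

text \<open>Relative entropy D(p || q) = sum_j p_j ln(p_j/q_j), with 0 ln 0 = 0;
  equal to infinity when the series does not converge (its negative part
  always converges, so divergence means divergence to +infinity).\<close>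
definition relent :: "(nat \<Rightarrow> real) \<Rightarrow> (nat \<Rightarrow> real) \<Rightarrow> ereal" where
  "relent p q = (let f = (\<lambda>j. if p j = 0 then 0 else p j * ln (p j / q j))
                 in if summable f then ereal (suminf f) else \<infinity>)"

definition Jfun :: "nat \<Rightarrow> (nat \<Rightarrow> real) \<Rightarrow> (nat \<Rightarrow> real) \<Rightarrow> real \<Rightarrow> ereal" where
  "Jfun I \<alpha> \<omega> \<beta> =
    (if feasible I \<alpha> \<omega> \<beta> then
       (let K = {k. k \<le> I+1 \<and> \<alpha> k > 0} in
        Inf { (\<Sum>k\<in>K. ereal (\<alpha> k) * relent (\<pi> k) (poisson \<beta>)) | \<pi> :: nat \<Rightarrow> nat \<Rightarrow> real.
              (\<forall>k\<in>K. prob_dist (\<pi> k) \<and> summable (\<lambda>j. real j * \<pi> k j)) \<and>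
              (\<Sum>k\<in>K. \<alpha> k * (\<Sum>j. real j * \<pi> k j)) = \<beta> \<and>
              (\<forall>i\<le>I. \<omega> i = (\<Sum>k\<in>{k\<in>K. k \<le> i}. \<alpha> k * \<pi> k (i - k))) })
     else \<infinity>)"

end

theory Submission
  imports Defs "HOL-Library.Diagonal_Subsequence"
begin

definition Fe :: "real \<Rightarrow> real \<Rightarrow> real" where
  "Fe p q = (if p = 0 then 0 else p * ln (p / q))"

lemma relent_alt: "relent p q = (if summable (\<lambda>j. Fe (p j) (q j)) then ereal (\<Sum>j. Fe (p j) (q j)) else \<infinity>)"
  unfolding relent_def Fe_def Let_def by simp

lemma Fe_lower:
  assumes "0 \<le> p" "0 < q"
  shows "p * g + p - q * exp g \<le> Fe p q"
proof (cases "p = 0")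
  case True then show ?thesis using assms by (simp add: Fe_def)
next
  case False
  then have p: "0 < p" using assms by simp
  have "ln (q * exp g / p) \<le> q * exp g / p - 1"
    using p assms by (intro ln_le_minus_one) simp
  moreover have "ln (q * exp g / p) = ln q + g - ln p"
    using p assms by (simp add: ln_div ln_mult)
  ultimately have "p * (ln q + g - ln p) \<le> p * (q * exp g / p - 1)"
    using p by (intro mult_left_mono) auto
  also have "\<dots> = q * exp g - p" using p by (simp add: field_simps)
  finally show ?thesis using p assms False by (simp add: Fe_def ln_div algebra_simps)
qed

lemma Fe_lower0: "0 \<le> p \<Longrightarrow> 0 < q \<Longrightarrow> p - q \<le> Fe p q"
  using Fe_lower[of p q 0] by simp

lemma poisson_pos: "0 < b \<Longrightarrow> 0 < poisson b j"
  by (simp add: poisson_def)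

lemma poisson_sums: "poisson b sums 1"
proof -
  have "(\<lambda>n. exp (-b) * (b^n /\<^sub>R fact n)) sums (exp (-b) * exp b)"
    by (intro sums_mult exp_converges)
  moreover have "poisson b = (\<lambda>n. exp (-b) * (b^n /\<^sub>R fact n))"
    by (auto simp: poisson_def fun_eq_iff field_simps)
  ultimately show ?thesis by (simp add: exp_minus field_simps)
qed

lemma poisson_exp_le:
  assumes "0 < b" "b * exp t \<le> x"
  shows "poisson b j * exp (t * j) \<le> x ^ j / fact j"
proof -
  have "poisson b j * exp (t * j) = exp (-b) * (b * exp t) ^ j / fact j"
    by (simp add: poisson_def power_mult_distrib exp_of_nat_mult[symmetric] mult.commute)
  also have "\<dots> \<le> 1 * (b * exp t) ^ j / fact j"
    using assms by (intro divide_right_mono mult_right_mono) auto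
  also have "(b * exp t) ^ j \<le> x ^ j"
    by (rule power_mono) (use assms in auto)
  then have "1 * (b * exp t) ^ j / fact j \<le> x ^ j / fact j"
    by (intro divide_right_mono) auto
  finally show ?thesis .
qed

lemma exp_tail_small:
  fixes x :: real
  assumes "0 < e"
  shows "\<exists>M. \<forall>N. (\<Sum>j\<in>{M..<N}. x ^ j / fact j) \<le> e"
proof -
  have "summable (\<lambda>n. inverse (fact n) * x^n)" by (rule summable_exp)
  then obtain M where "\<forall>m\<ge>M. \<forall>n. norm (\<Sum>j\<in>{m..<n}. inverse (fact j) * x^j) < e"
    using assms unfolding summable_Cauchy by blast
  note M = this
  have "(\<Sum>j\<in>{M..<N}. x ^ j / fact j) \<le> e" for N
  proof -
    have "(\<Sum>j\<in>{M..<N}. x ^ j / fact j) = (\<Sum>j\<in>{M..<N}. inverse (fact j) * x^j)"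
      by (simp add: field_simps)
    also have "\<dots> \<le> norm (\<Sum>j\<in>{M..<N}. inverse (fact j) * x^j)" by simp
    also have "\<dots> < e" using M by auto
    finally show ?thesis by simp
  qed
  then show ?thesis by blast
qed

lemma xlnx_bound:
  assumes "0 < p" "p \<le> 1"
  shows "\<bar>p * ln p\<bar> \<le> 2 * sqrt p"
proof -
  have sp: "0 < sqrt p" using assms by simp
  have "ln (1 / sqrt p) \<le> 1 / sqrt p - 1" using sp by (intro ln_le_minus_one) simp
  moreover have "ln (1 / sqrt p) = - ln p / 2"
    using assms by (simp add: ln_div ln_sqrt)
  ultimately have "- ln p \<le> 2 / sqrt p" by (simp add: field_simps)
  then have "p * (- ln p) \<le> p * (2 / sqrt p)" using assms by (intro mult_left_mono) auto
  also have "p * (2 / sqrt p) = 2 * sqrt p"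
    using sp assms by (metis (no_types, lifting) real_div_sqrt times_divide_eq_right mult.commute less_imp_le)
  finally have "- (p * ln p) \<le> 2 * sqrt p" by simp
  moreover have "ln p \<le> 0" using assms by simp
  then have "p * ln p \<le> 0" using assms by (simp add: mult_nonneg_nonpos)
  ultimately show ?thesis by simp
qed

lemma Fe_bound:
  assumes "0 \<le> p" "p \<le> 1" "0 < q"
  shows "\<bar>Fe p q\<bar> \<le> 2 * sqrt p + p * \<bar>ln q\<bar>"
proof (cases "p = 0")
  case True then show ?thesis by (simp add: Fe_def)
next
  case False
  then have p: "0 < p" using assms by simp
  have "Fe p q = p * ln p - p * ln q" using p assms by (simp add: Fe_def ln_div algebra_simps)
  then have "\<bar>Fe p q\<bar> \<le> \<bar>p * ln p\<bar> + \<bar>p * ln q\<bar>" by simp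
  also have "\<bar>p * ln q\<bar> = p * \<bar>ln q\<bar>" using p by (simp add: abs_mult)
  finally show ?thesis using xlnx_bound[OF p assms(2)] by simp
qed

lemma Fe_tendsto:
  assumes p0: "\<And>n. 0 \<le> p n" and p: "p \<longlonglongrightarrow> a" and q: "q \<longlonglongrightarrow> b" and b: "0 < b"
  shows "(\<lambda>n. Fe (p n) (q n)) \<longlonglongrightarrow> Fe a b"
proof (cases "a = 0")
  case True
  have ev1: "eventually (\<lambda>n. p n < 1) sequentially" using p True by (intro order_tendstoD) auto
  have ev2: "eventually (\<lambda>n. 0 < q n) sequentially" using q b by (intro order_tendstoD) auto
  have "eventually (\<lambda>n. norm (Fe (p n) (q n)) \<le> 2 * sqrt (p n) + p n * \<bar>ln (q n)\<bar>) sequentially"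
    using ev1 ev2 by eventually_elim (use p0 in \<open>auto intro!: Fe_bound\<close>)
  moreover have "(\<lambda>n. 2 * sqrt (p n) + p n * \<bar>ln (q n)\<bar>) \<longlonglongrightarrow> 2 * sqrt a + a * \<bar>ln b\<bar>"
    using p q b by (intro tendsto_intros) auto
  then have "(\<lambda>n. 2 * sqrt (p n) + p n * \<bar>ln (q n)\<bar>) \<longlonglongrightarrow> 0" using True by simp
  ultimately have "(\<lambda>n. Fe (p n) (q n)) \<longlonglongrightarrow> 0" by (rule Lim_null_comparison)
  then show ?thesis using True by (simp add: Fe_def)
next
  case False
  then have a: "0 < a" using p0 p by (metis LIMSEQ_le_const order_le_less)
  have ev1: "eventually (\<lambda>n. 0 < p n) sequentially" using p a by (intro order_tendstoD) auto
  have lim: "(\<lambda>n. p n * ln (p n / q n)) \<longlonglongrightarrow> a * ln (a / b)"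
    using p q a b by (intro tendsto_intros) auto
  have "eventually (\<lambda>n. p n * ln (p n / q n) = Fe (p n) (q n)) sequentially"
    using ev1 by eventually_elim (auto simp: Fe_def)
  from tendsto_cong[OF this] lim show ?thesis using a by (simp add: Fe_def)
qed

lemma diag_extract:
  fixes f :: "nat \<Rightarrow> nat \<Rightarrow> real"
  assumes bdd: "\<And>n m. \<bar>f n m\<bar> \<le> M"
  shows "\<exists>d. strict_mono d \<and> (\<forall>m. convergent (\<lambda>i. f (d i) m))"
proof -
  let ?P = "\<lambda>m. \<lambda>s. convergent (\<lambda>k. f (s k) m)"
  interpret nat: subseqs ?P
  proof (unfold convergent_def, unfold subseqs_def, auto)
    fix n :: nat and s :: "nat \<Rightarrow> nat" assume s: "strict_mono s"
    have "bounded {-M..M}"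
      using bounded_closed_interval by auto
    moreover have "\<And>k. f (s k) n \<in> {-M..M}"
      using bdd by (simp add: abs_le_iff minus_le_iff)
    ultimately have "\<exists>l s'. strict_mono s' \<and> ((\<lambda>k. f (s k) n) \<circ> s') \<longlonglongrightarrow> l"
      using compact_Icc compact_imp_seq_compact seq_compactE by metis
    thus "\<exists>s'. strict_mono (s'::nat\<Rightarrow>nat) \<and> (\<exists>l. (\<lambda>k. f (s (s' k)) n) \<longlonglongrightarrow> l)"
      by (auto simp: comp_def)
  qed
  define d where "d = nat.diagseq"
  have subseq: "strict_mono d"
    unfolding d_def using nat.subseq_diagseq by auto
  have rat_cnv: "?P n d" for n
  proof -
    have Pn_seqseq: "?P n (nat.seqseq (Suc n))"
      by (rule nat.seqseq_holds)
    have 1: "(\<lambda>k. f ((nat.seqseq (Suc n) \<circ> (\<lambda>k. nat.fold_reduce (Suc n) k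
      (Suc n + k))) k) n) = (\<lambda>k. f (nat.seqseq (Suc n) k) n) \<circ>
      (\<lambda>k. nat.fold_reduce (Suc n) k (Suc n + k))"
      by auto
    have 2: "?P n (d \<circ> ((+) (Suc n)))"
      unfolding d_def nat.diagseq_seqseq 1
      by (intro convergent_subseq_convergent Pn_seqseq nat.subseq_diagonal_rest)
    then obtain L where 3: "(\<lambda>na. f (d (na + Suc n)) n) \<longlonglongrightarrow> L"
      by (auto simp: add.commute dest: convergentD)
    then have "(\<lambda>k. f (d k) n) \<longlonglongrightarrow> L"
      by (rule LIMSEQ_offset)
    then show ?thesis
      by (auto simp: convergent_def)
  qed
  show ?thesis using subseq rat_cnv by blast
qed

lemma prob_le1: "prob_dist p \<Longrightarrow> p j \<le> 1"
  unfolding prob_dist_def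
  using sum_le_suminf[of p "{j}"] by (auto simp: sums_iff)

lemma partial_le1: "prob_dist p \<Longrightarrow> (\<Sum>j<N. p j) \<le> 1"
  unfolding prob_dist_def
  using sum_le_suminf[of p "{..<N}"] by (auto simp: sums_iff)

locale pdist =
  fixes p q :: "nat \<Rightarrow> real"
  assumes pd: "prob_dist p" and qpos: "\<And>j. 0 < q j" and qs: "q sums 1"
    and Fs: "summable (\<lambda>j. Fe (p j) (q j))"
begin

definition "h j = Fe (p j) (q j) - p j + q j"

lemma p0: "0 \<le> p j" using pd by (simp add: prob_dist_def)
lemma jp0: "0 \<le> real j * p j" using p0[of j] by simp
lemma ps: "p sums 1" using pd by (simp add: prob_dist_def)

lemma h0: "0 \<le> h j"
  using Fe_lower0[OF p0[of j] qpos[of j]] by (simp add: h_def)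

lemma h_sums: "h sums (\<Sum>j. Fe (p j) (q j))"
proof -
  have "(\<lambda>j. Fe (p j) (q j) - p j + q j) sums ((\<Sum>j. Fe (p j) (q j)) - 1 + 1)"
    by (intro sums_add sums_diff summable_sums Fs ps qs)
  then show ?thesis by (simp add: h_def[abs_def])
qed

lemma h_partial: "(\<Sum>j<N. h j) \<le> (\<Sum>j. Fe (p j) (q j))"
  using sum_le_suminf[of h "{..<N}"] h_sums h0 by (auto simp: sums_iff)

lemma D0: "0 \<le> (\<Sum>j. Fe (p j) (q j))"
  using h_partial[of 0] by simp

lemma h_partial_ge: "M \<le> N \<Longrightarrow> (\<Sum>j\<in>{M..<N}. h j) \<le> (\<Sum>j. Fe (p j) (q j))"
proof -
  assume "M \<le> N"
  have "(\<Sum>j\<in>{M..<N}. h j) \<le> (\<Sum>j\<in>{..<N}. h j)"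
    by (intro sum_mono2) (auto intro: h0)
  then show ?thesis using h_partial[of N] by simp
qed

lemma tail_moment:
  assumes "0 < t" "M \<le> N"
  shows "t * (\<Sum>j\<in>{M..<N}. real j * p j) \<le> (\<Sum>j. Fe (p j) (q j)) + (\<Sum>j\<in>{M..<N}. q j * exp (t * j))"
proof -
  have "t * (\<Sum>j\<in>{M..<N}. real j * p j) = (\<Sum>j\<in>{M..<N}. p j * (t * j))"
    by (simp add: sum_distrib_left algebra_simps)
  also have "\<dots> \<le> (\<Sum>j\<in>{M..<N}. h j + q j * exp (t * j))"
  proof (intro sum_mono)
    fix j
    have "p j * (t * j) + p j - q j * exp (t * j) \<le> Fe (p j) (q j)"
      by (rule Fe_lower[OF p0 qpos])
    moreover have "0 \<le> q j" using qpos[of j] by simp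
    ultimately show "p j * (t * j) \<le> h j + q j * exp (t * j)"
      unfolding h_def by linarith
  qed
  also have "\<dots> = (\<Sum>j\<in>{M..<N}. h j) + (\<Sum>j\<in>{M..<N}. q j * exp (t * j))"
    by (simp add: sum.distrib)
  also have "\<dots> \<le> (\<Sum>j. Fe (p j) (q j)) + (\<Sum>j\<in>{M..<N}. q j * exp (t * j))"
    using h_partial_ge[OF assms(2)] by simp
  finally show ?thesis .
qed

lemma mean_bound:
  assumes ms: "summable (\<lambda>j. real j * p j)" and t: "0 < t"
    and T: "\<And>N. M \<le> N \<Longrightarrow> (\<Sum>j\<in>{M..<N}. q j * exp (t * j)) \<le> T" and T0: "0 \<le> T"
  shows "(\<Sum>j. real j * p j) \<le> (\<Sum>j<M. real j * p j) + ((\<Sum>j. Fe (p j) (q j)) + T) / t"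
proof (rule suminf_le_const[OF ms])
  fix N
  have c0: "0 \<le> ((\<Sum>j. Fe (p j) (q j)) + T) / t" using D0 T0 t by simp
  show "(\<Sum>j<N. real j * p j) \<le> (\<Sum>j<M. real j * p j) + ((\<Sum>j. Fe (p j) (q j)) + T) / t"
  proof (cases "N \<le> M")
    case True
    then have "(\<Sum>j<N. real j * p j) \<le> (\<Sum>j<M. real j * p j)"
      by (intro sum_mono2) (auto simp: jp0)
    then show ?thesis using c0 by simp
  next
    case False
    then have MN: "M \<le> N" by simp
    have split: "(\<Sum>j<N. real j * p j) = (\<Sum>j<M. real j * p j) + (\<Sum>j\<in>{M..<N}. real j * p j)"
      using MN by (metis atLeast0LessThan sum.atLeastLessThan_concat zero_le)
    have "t * (\<Sum>j\<in>{M..<N}. real j * p j) \<le> (\<Sum>j. Fe (p j) (q j)) + T"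
      using tail_moment[OF t MN] T[OF MN] by simp
    then have "(\<Sum>j\<in>{M..<N}. real j * p j) \<le> ((\<Sum>j. Fe (p j) (q j)) + T) / t"
      using t by (simp add: field_simps)
    then show ?thesis using split by simp
  qed
qed

end

lemma mass_bound:
  assumes pd: "prob_dist p" and ms: "summable (\<lambda>j. real j * p j)" and M: "0 < M"
  shows "1 - (\<Sum>j<M. p j) \<le> (\<Sum>j. real j * p j) / M"
proof -
  have p0: "\<And>j. 0 \<le> p j" and ps: "p sums 1" using pd by (auto simp: prob_dist_def)
  have jp0: "\<And>j. 0 \<le> real j * p j / M" using p0 by simp
  have lim: "(\<lambda>N. (\<Sum>j<N. p j) - (\<Sum>j<M. p j)) \<longlonglongrightarrow> 1 - (\<Sum>j<M. p j)"
    using ps unfolding sums_def by (intro tendsto_intros)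
  have "\<forall>N\<ge>M. (\<Sum>j<N. p j) - (\<Sum>j<M. p j) \<le> (\<Sum>j. real j * p j) / M"
  proof (intro allI impI)
    fix N assume MN: "M \<le> N"
    have "(\<Sum>j<N. p j) - (\<Sum>j<M. p j) = (\<Sum>j\<in>{M..<N}. p j)"
      using MN by (metis atLeast0LessThan sum.atLeastLessThan_concat zero_le add_diff_cancel_left')
    also have "\<dots> \<le> (\<Sum>j\<in>{M..<N}. real j * p j / M)"
    proof (intro sum_mono)
      fix j assume "j \<in> {M..<N}"
      then have "real M \<le> real j" by simp
      then have "real M * p j \<le> real j * p j" using p0[of j] by (intro mult_right_mono) auto
      then show "p j \<le> real j * p j / M" using M by (simp add: field_simps)
    qed
    also have "\<dots> \<le> (\<Sum>j<N. real j * p j / M)"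
      by (intro sum_mono2) (auto simp: jp0)
    also have "\<dots> = (\<Sum>j<N. real j * p j) / M" by (simp add: sum_divide_distrib)
    also have "\<dots> \<le> (\<Sum>j. real j * p j) / M"
      using sum_le_suminf[OF ms, of "{..<N}"] p0 M by (intro divide_right_mono) auto
    finally show "(\<Sum>j<N. p j) - (\<Sum>j<M. p j) \<le> (\<Sum>j. real j * p j) / M" .
  qed
  then show ?thesis using LIMSEQ_le_const2[OF lim] by blast
qed

lemma pdist_poisson:
  assumes "prob_dist p" "0 < b" "summable (\<lambda>j. Fe (p j) (poisson b j))"
  shows "pdist p (poisson b)"
  using assms poisson_pos poisson_sums by unfold_locales auto

lemma relent_nonneg:
  assumes "prob_dist p" "0 < b"
  shows "0 \<le> relent p (poisson b)"
proof (cases "summable (\<lambda>j. Fe (p j) (poisson b j))")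
  case True
  then interpret pdist p "poisson b" using pdist_poisson assms by blast
  show ?thesis using D0 True by (simp add: relent_alt)
qed (simp add: relent_alt)

lemma cost_real:
  assumes fin: "finite K" and pos: "\<forall>k\<in>K. 0 < a k \<and> prob_dist (p k)" and b: "0 < b"
    and lt: "(\<Sum>k\<in>K. ereal (a k) * relent (p k) (poisson b)) < ereal L"
  shows "\<forall>k\<in>K. summable (\<lambda>j. Fe (p k j) (poisson b j))"
    and "(\<Sum>k\<in>K. a k * (\<Sum>j. Fe (p k j) (poisson b j))) < L"
proof -
  show sm: "\<forall>k\<in>K. summable (\<lambda>j. Fe (p k j) (poisson b j))"
  proof (rule ccontr)
    assume "\<not> ?thesis"
    then obtain k where k: "k \<in> K" "\<not> summable (\<lambda>j. Fe (p k j) (poisson b j))" by blast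
    then have "ereal (a k) * relent (p k) (poisson b) = \<infinity>"
      using pos k(1) by (auto simp: relent_alt)
    then have "(\<Sum>k\<in>K. ereal (a k) * relent (p k) (poisson b)) = \<infinity>"
      using fin k by (subst sum_Pinfty) blast
    then show False using lt by simp
  qed
  have "(\<Sum>k\<in>K. ereal (a k) * relent (p k) (poisson b)) = (\<Sum>k\<in>K. ereal (a k * (\<Sum>j. Fe (p k j) (poisson b j))))"
    using sm by (intro sum.cong) (auto simp: relent_alt)
  then show "(\<Sum>k\<in>K. a k * (\<Sum>j. Fe (p k j) (poisson b j))) < L" using lt by simp
qed

lemma simplex_bounds:
  assumes "simplexI I g" "k \<le> I + 1"
  shows "0 \<le> g k" "g k \<le> 1"
proof -
  show g0: "0 \<le> g k" using assms by (simp add: simplexI_def)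
  have "g k \<le> (\<Sum>j\<le>I+1. g j)"
    using assms by (intro member_le_sum) (auto simp: simplexI_def)
  then show "g k \<le> 1" using assms by (simp add: simplexI_def)
qed

lemma sum_if_subset:
  fixes f g :: "'a \<Rightarrow> real"
  assumes "finite T" "S \<subseteq> T" "\<And>x. x \<in> T \<Longrightarrow> f x = (if x \<in> S then g x else 0)"
  shows "sum f T = sum g S"
proof -
  have "sum g S = sum f T"
    by (rule sum.mono_neutral_cong_left) (use assms in auto)
  then show ?thesis by simp
qed

lemma core:
  fixes I :: nat and \<alpha>s \<omega>s :: "nat \<Rightarrow> nat \<Rightarrow> real" and \<beta>s :: "nat \<Rightarrow> real"
    and \<alpha> \<omega> :: "nat \<Rightarrow> real" and \<beta> L :: real
    and \<pi>s :: "nat \<Rightarrow> nat \<Rightarrow> nat \<Rightarrow> real" and \<pi> :: "nat \<Rightarrow> nat \<Rightarrow> real"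
  assumes feas_n: "\<And>n. feasible I (\<alpha>s n) (\<omega>s n) (\<beta>s n)"
    and feas: "feasible I \<alpha> \<omega> \<beta>"
    and conv_\<alpha>: "\<And>j. j \<le> I + 1 \<Longrightarrow> (\<lambda>n. \<alpha>s n j) \<longlonglongrightarrow> \<alpha> j"
    and conv_\<omega>: "\<And>j. j \<le> I + 1 \<Longrightarrow> (\<lambda>n. \<omega>s n j) \<longlonglongrightarrow> \<omega> j"
    and conv_\<beta>: "\<beta>s \<longlonglongrightarrow> \<beta>"
    and pis_dist: "\<And>n k. k \<le> I + 1 \<Longrightarrow> 0 < \<alpha>s n k \<Longrightarrow> prob_dist (\<pi>s n k) \<and> summable (\<lambda>j. real j * \<pi>s n k j)"
    and pis_mean: "\<And>n. (\<Sum>k\<in>{k. k \<le> I+1 \<and> \<alpha>s n k > 0}. \<alpha>s n k * (\<Sum>j. real j * \<pi>s n k j)) = \<beta>s n"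
    and pis_omega: "\<And>n i. i \<le> I \<Longrightarrow> \<omega>s n i = (\<Sum>k\<in>{k\<in>{k. k \<le> I+1 \<and> \<alpha>s n k > 0}. k \<le> i}. \<alpha>s n k * \<pi>s n k (i - k))"
    and cost: "\<And>n. (\<Sum>k\<in>{k. k \<le> I+1 \<and> \<alpha>s n k > 0}. ereal (\<alpha>s n k) * relent (\<pi>s n k) (poisson (\<beta>s n))) < ereal L"
    and conv_\<rho>: "\<And>k j. k \<le> I + 1 \<Longrightarrow> (\<lambda>n. if 0 < \<alpha>s n k then \<pi>s n k j else 0) \<longlonglongrightarrow> \<pi> k j"
  shows "Jfun I \<alpha> \<omega> \<beta> \<le> ereal L"
proof -
  define Kn where "Kn n = {k. k \<le> I+1 \<and> \<alpha>s n k > 0}" for n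
  define K where "K = {k. k \<le> I+1 \<and> \<alpha> k > 0}"
  define \<rho> where "\<rho> n k j = (if 0 < \<alpha>s n k then \<pi>s n k j else 0)" for n k j
  define P where "P n = poisson (\<beta>s n)" for n
  define m where "m n k = (\<Sum>j. real j * \<pi>s n k j)" for n k
  define Dn where "Dn n k = (\<Sum>j. Fe (\<pi>s n k j) (P n j))" for n k
  have finKn: "finite (Kn n)" for n by (simp add: Kn_def)
  have finK: "finite K" by (simp add: K_def)
  have \<beta>: "0 < \<beta>" using feas by (simp add: feasible_def)
  have \<beta>n: "0 < \<beta>s n" for n using feas_n[of n] by (simp add: feasible_def)
  have an0: "0 \<le> \<alpha>s n k" "\<alpha>s n k \<le> 1" if "k \<le> I+1" for n k
    using simplex_bounds[of I "\<alpha>s n" k] feas_n[of n] that by (auto simp: feasible_def)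
  have a0: "0 \<le> \<alpha> k" "\<alpha> k \<le> 1" if "k \<le> I+1" for k
    using simplex_bounds[of I \<alpha> k] feas that by (auto simp: feasible_def)
  have pd: "prob_dist (\<pi>s n k)" "summable (\<lambda>j. real j * \<pi>s n k j)" if "k \<in> Kn n" for n k
    using pis_dist[of k n] that by (auto simp: Kn_def)
  have mean: "(\<Sum>k\<in>Kn n. \<alpha>s n k * m n k) = \<beta>s n" for n
    using pis_mean[of n] by (simp add: Kn_def m_def)
  have m0: "0 \<le> m n k" if "k \<in> Kn n" for n k
    unfolding m_def using pd[OF that] by (intro suminf_nonneg) (auto simp: prob_dist_def)
  have am_le: "\<alpha>s n k * m n k \<le> \<beta>s n" if "k \<in> Kn n" for n k
  proof -
    have "\<alpha>s n k * m n k \<le> (\<Sum>k\<in>Kn n. \<alpha>s n k * m n k)"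
      using that finKn m0 by (intro member_le_sum) (auto simp: Kn_def)
    then show ?thesis using mean by simp
  qed
  have costn: "\<forall>k\<in>Kn n. summable (\<lambda>j. Fe (\<pi>s n k j) (P n j))"
     "(\<Sum>k\<in>Kn n. \<alpha>s n k * Dn n k) < L" for n
  proof -
    have h1: "\<forall>k\<in>Kn n. 0 < \<alpha>s n k \<and> prob_dist (\<pi>s n k)" using pd by (auto simp: Kn_def)
    have c: "(\<Sum>k\<in>Kn n. ereal (\<alpha>s n k) * relent (\<pi>s n k) (poisson (\<beta>s n))) < ereal L"
      using cost[of n] unfolding Kn_def .
    show "\<forall>k\<in>Kn n. summable (\<lambda>j. Fe (\<pi>s n k j) (P n j))"
      using cost_real(1)[OF finKn h1 \<beta>n c] unfolding P_def .
    show "(\<Sum>k\<in>Kn n. \<alpha>s n k * Dn n k) < L"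
      using cost_real(2)[OF finKn h1 \<beta>n c] unfolding P_def Dn_def .
  qed
  have pdn: "pdist (\<pi>s n k) (P n)" if "k \<in> Kn n" for n k
    unfolding P_def using pd[OF that] \<beta>n costn(1)[of n] that by (intro pdist_poisson) (auto simp: P_def)
  have Dn0: "0 \<le> Dn n k" if "k \<in> Kn n" for n k
    using pdist.D0[OF pdn[OF that]] by (simp add: Dn_def)
  have aD_le: "\<alpha>s n k * Dn n k < L" if "k \<in> Kn n" for n k
  proof -
    have "\<alpha>s n k * Dn n k \<le> (\<Sum>k\<in>Kn n. \<alpha>s n k * Dn n k)"
      using that finKn Dn0 by (intro member_le_sum) (auto simp: Kn_def)
    then show ?thesis using costn(2)[of n] by simp
  qed
  have \<rho>0: "0 \<le> \<rho> n k j" if "k \<le> I+1" for n k j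
  proof (cases "k \<in> Kn n")
    case True
    then show ?thesis using pd(1)[OF True] by (auto simp: \<rho>_def prob_dist_def)
  qed (use that in \<open>auto simp: \<rho>_def Kn_def\<close>)
  have \<rho>_conv: "(\<lambda>n. \<rho> n k j) \<longlonglongrightarrow> \<pi> k j" if "k \<le> I+1" for k j
    using conv_\<rho>[OF that] by (simp add: \<rho>_def)
  have \<pi>0: "0 \<le> \<pi> k j" if "k \<le> I+1" for k j
    by (rule LIMSEQ_le_const[OF \<rho>_conv[OF that, of j]]) (use \<rho>0[OF that] in auto)
  have a\<rho>: "\<alpha>s n k * \<rho> n k j = (if k \<in> Kn n then \<alpha>s n k * \<pi>s n k j else 0)" if "k \<le> I+1" for n k j
    using an0[OF that, of n] that by (auto simp: \<rho>_def Kn_def)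
  have evK: "eventually (\<lambda>n. K \<subseteq> Kn n) sequentially"
  proof -
    have "eventually (\<lambda>n. \<forall>k\<in>K. 0 < \<alpha>s n k) sequentially"
      using finK by (intro eventually_ball_finite ballI order_tendstoD(1)[OF conv_\<alpha>]) (auto simp: K_def)
    then show ?thesis by eventually_elim (auto simp: K_def Kn_def)
  qed
  have aK0: "\<alpha> k = 0" if "k \<le> I+1" "k \<notin> K" for k
    using a0[OF that(1)] that by (auto simp: K_def)
  have omega_eq: "\<forall>i\<le>I. \<omega> i = (\<Sum>k\<in>{k\<in>K. k \<le> i}. \<alpha> k * \<pi> k (i - k))"
  proof (intro allI impI)
    fix i assume i: "i \<le> I"
    have eqn: "\<omega>s n i = (\<Sum>k\<le>i. \<alpha>s n k * \<rho> n k (i-k))" for n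
    proof -
      have "(\<Sum>k\<le>i. \<alpha>s n k * \<rho> n k (i-k)) = (\<Sum>k\<in>{k\<in>Kn n. k \<le> i}. \<alpha>s n k * \<pi>s n k (i - k))"
        using i by (intro sum_if_subset) (auto simp: a\<rho> Kn_def)
      then show ?thesis using pis_omega[OF i] by (simp add: Kn_def)
    qed
    have "(\<lambda>n. \<Sum>k\<le>i. \<alpha>s n k * \<rho> n k (i-k)) \<longlonglongrightarrow> (\<Sum>k\<le>i. \<alpha> k * \<pi> k (i-k))"
      using i by (intro tendsto_sum tendsto_mult conv_\<alpha> \<rho>_conv) auto
    moreover have "(\<lambda>n. \<Sum>k\<le>i. \<alpha>s n k * \<rho> n k (i-k)) \<longlonglongrightarrow> \<omega> i"
      using conv_\<omega>[of i] i eqn by simp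
    ultimately have "\<omega> i = (\<Sum>k\<le>i. \<alpha> k * \<pi> k (i-k))" using LIMSEQ_unique by blast
    also have "\<dots> = (\<Sum>k\<in>{k\<in>K. k \<le> i}. \<alpha> k * \<pi> k (i - k))"
      using i by (intro sum_if_subset) (auto simp: aK0 K_def)
    finally show "\<omega> i = (\<Sum>k\<in>{k\<in>K. k \<le> i}. \<alpha> k * \<pi> k (i - k))" .
  qed
  have a\<rho>sum: "\<alpha>s n k * (\<Sum>j<M. real j * \<rho> n k j) = (if k \<in> Kn n then \<alpha>s n k * (\<Sum>j<M. real j * \<pi>s n k j) else 0)"
    if "k \<le> I+1" for n k M
    using an0[OF that, of n] that by (auto simp: \<rho>_def Kn_def)
  have partial_m: "(\<Sum>j<M. real j * \<pi>s n k j) \<le> m n k" if "k \<in> Kn n" for n k M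
    unfolding m_def using pd[OF that] by (intro sum_le_suminf) (auto simp: prob_dist_def)
  have mean_partial: "\<alpha> k * (\<Sum>j<M. real j * \<pi> k j) \<le> \<beta>" if k: "k \<le> I+1" for k M
  proof -
    have le: "\<alpha>s n k * (\<Sum>j<M. real j * \<rho> n k j) \<le> \<beta>s n" for n
    proof (cases "k \<in> Kn n")
      case True
      have "\<alpha>s n k * (\<Sum>j<M. real j * \<pi>s n k j) \<le> \<alpha>s n k * m n k"
        using partial_m[OF True] an0[OF k] by (intro mult_left_mono) auto
      then show ?thesis using am_le[OF True] True a\<rho>sum[OF k] by simp
    next
      case False
      then have "\<alpha>s n k * (\<Sum>j<M. real j * \<rho> n k j) = 0" using a\<rho>sum[OF k, of n M] by simp
      then show ?thesis using \<beta>n[of n] by linarith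
    qed
    have "(\<lambda>n. \<alpha>s n k * (\<Sum>j<M. real j * \<rho> n k j)) \<longlonglongrightarrow> \<alpha> k * (\<Sum>j<M. real j * \<pi> k j)"
      using k by (intro tendsto_intros conv_\<alpha> \<rho>_conv)
    then show ?thesis using le conv_\<beta> by (intro LIMSEQ_le) auto
  qed
  have msum: "summable (\<lambda>j. real j * \<pi> k j)" if k: "k \<in> K" for k
  proof (rule summableI_nonneg_bounded)
    show "0 \<le> real j * \<pi> k j" for j using \<pi>0[of k j] k by (simp add: K_def)
    show "(\<Sum>j<M. real j * \<pi> k j) \<le> \<beta> / \<alpha> k" for M
      using mean_partial[of k M] k by (simp add: K_def field_simps)
  qed
  have pdist_lim: "prob_dist (\<pi> k)" if k: "k \<in> K" for k
  proof -
    have kI: "k \<le> I+1" and ak: "0 < \<alpha> k" using k by (auto simp: K_def)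
    have up: "(\<Sum>j<M. \<pi> k j) \<le> 1" for M
    proof -
      have "(\<Sum>j<M. \<rho> n k j) \<le> 1" for n
      proof (cases "0 < \<alpha>s n k")
        case True
        then have "k \<in> Kn n" using kI by (simp add: Kn_def)
        then show ?thesis using partial_le1[OF pd(1)] True by (simp add: \<rho>_def)
      qed (simp add: \<rho>_def)
      moreover have "(\<lambda>n. \<Sum>j<M. \<rho> n k j) \<longlonglongrightarrow> (\<Sum>j<M. \<pi> k j)"
        by (intro tendsto_intros \<rho>_conv kI)
      ultimately show ?thesis by (intro LIMSEQ_le_const2) auto
    qed
    have low: "1 - \<beta> / \<alpha> k / real M \<le> (\<Sum>j<M. \<pi> k j)" if M: "0 < M" for M
    proof -
      have "\<alpha>s n k * (1 - (\<Sum>j<M. \<rho> n k j)) \<le> \<beta>s n / M" for n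
      proof (cases "k \<in> Kn n")
        case True
        have "1 - (\<Sum>j<M. \<pi>s n k j) \<le> m n k / M"
          using mass_bound[OF pd(1)[OF True] pd(2)[OF True]] M by (simp add: m_def)
        then have "\<alpha>s n k * (1 - (\<Sum>j<M. \<pi>s n k j)) \<le> \<alpha>s n k * (m n k / M)"
          using an0[OF kI] by (intro mult_left_mono) auto
        also have "\<dots> = (\<alpha>s n k * m n k) / M" by simp
        also have "\<dots> \<le> \<beta>s n / M" using am_le[OF True] M by (intro divide_right_mono) auto
        finally show ?thesis using True by (simp add: \<rho>_def Kn_def)
      next
        case False
        then have "\<alpha>s n k = 0" using an0[OF kI, of n] kI by (auto simp: Kn_def)
        then show ?thesis using \<beta>n[of n] by simp
      qed
      moreover have "(\<lambda>n. \<alpha>s n k * (1 - (\<Sum>j<M. \<rho> n k j))) \<longlonglongrightarrow> \<alpha> k * (1 - (\<Sum>j<M. \<pi> k j))"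
        by (intro tendsto_intros \<rho>_conv kI conv_\<alpha>)
      moreover have "(\<lambda>n. \<beta>s n / M) \<longlonglongrightarrow> \<beta> / M"
        by (intro tendsto_intros conv_\<beta>) (use M in auto)
      ultimately have "\<alpha> k * (1 - (\<Sum>j<M. \<pi> k j)) \<le> \<beta> / M"
        by (intro LIMSEQ_le) auto
      then show ?thesis using ak M by (simp add: field_simps)
    qed
    have "(\<lambda>M. \<Sum>j<M. \<pi> k j) \<longlonglongrightarrow> 1"
    proof (rule real_tendsto_sandwich)
      show "eventually (\<lambda>M. 1 - \<beta> / \<alpha> k / real M \<le> (\<Sum>j<M. \<pi> k j)) sequentially"
        using eventually_gt_at_top[of 0] by (rule eventually_mono) (rule low)
      show "eventually (\<lambda>M. (\<Sum>j<M. \<pi> k j) \<le> 1) sequentially" using up by simp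
      have "(\<lambda>M. 1 - \<beta> / \<alpha> k / real M) \<longlonglongrightarrow> 1 - 0"
        by (intro tendsto_intros lim_const_over_n)
      then show "(\<lambda>M. 1 - \<beta> / \<alpha> k / real M) \<longlonglongrightarrow> 1" by simp
    qed simp
    then show ?thesis using \<pi>0 kI by (auto simp: prob_dist_def sums_def)
  qed
  define S where "S = (\<Sum>k\<in>K. \<alpha> k * (\<Sum>j. real j * \<pi> k j))"
  have sumK: "(\<Sum>k\<le>I+1. \<alpha> k * f k) = (\<Sum>k\<in>K. \<alpha> k * f k)" for f :: "nat \<Rightarrow> real"
    by (intro sum_if_subset) (auto simp: K_def aK0)
  have sumKn: "(\<Sum>k\<le>I+1. \<alpha>s n k * (\<Sum>j<M. real j * \<rho> n k j)) = (\<Sum>k\<in>Kn n. \<alpha>s n k * (\<Sum>j<M. real j * \<pi>s n k j))" for n M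
    by (intro sum_if_subset) (auto simp: Kn_def a\<rho>sum)
  have limM: "(\<lambda>n. \<Sum>k\<le>I+1. \<alpha>s n k * (\<Sum>j<M. real j * \<rho> n k j)) \<longlonglongrightarrow> (\<Sum>k\<in>K. \<alpha> k * (\<Sum>j<M. real j * \<pi> k j))" for M
  proof -
    have "(\<lambda>n. \<Sum>k\<le>I+1. \<alpha>s n k * (\<Sum>j<M. real j * \<rho> n k j)) \<longlonglongrightarrow> (\<Sum>k\<le>I+1. \<alpha> k * (\<Sum>j<M. real j * \<pi> k j))"
      by (intro tendsto_intros conv_\<alpha> \<rho>_conv) auto
    moreover have "(\<Sum>k\<le>I+1. \<alpha> k * (\<Sum>j<M. real j * \<pi> k j)) = (\<Sum>k\<in>K. \<alpha> k * (\<Sum>j<M. real j * \<pi> k j))"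
      by (rule sumK)
    ultimately show ?thesis by metis
  qed
  have limS: "(\<lambda>M. \<Sum>k\<in>K. \<alpha> k * (\<Sum>j<M. real j * \<pi> k j)) \<longlonglongrightarrow> S"
    unfolding S_def by (intro tendsto_intros summable_LIMSEQ msum)
  have S_le: "S \<le> \<beta>"
  proof -
    have "(\<Sum>k\<in>K. \<alpha> k * (\<Sum>j<M. real j * \<pi> k j)) \<le> \<beta>" for M
    proof -
      have "(\<Sum>k\<le>I+1. \<alpha>s n k * (\<Sum>j<M. real j * \<rho> n k j)) \<le> \<beta>s n" for n
      proof -
        have "(\<Sum>k\<in>Kn n. \<alpha>s n k * (\<Sum>j<M. real j * \<pi>s n k j)) \<le> (\<Sum>k\<in>Kn n. \<alpha>s n k * m n k)"
          using partial_m by (intro sum_mono mult_left_mono) (auto simp: Kn_def)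
        then show ?thesis using sumKn mean by simp
      qed
      then show ?thesis using limM[of M] conv_\<beta> by (intro LIMSEQ_le) auto
    qed
    then show ?thesis using limS by (intro LIMSEQ_le_const2) auto
  qed
  have S_ge: "\<beta> \<le> S"
  proof (rule field_le_epsilon)
    fix e :: real assume e: "0 < e"
    define \<epsilon> where "\<epsilon> = e / (I + 2)"
    have \<epsilon>: "0 < \<epsilon>" using e by (simp add: \<epsilon>_def)
    define t where "t = (\<bar>L\<bar> + 1) / \<epsilon>"
    have t: "0 < t" using \<epsilon> by (simp add: t_def)
    define x where "x = 2 * \<beta> * exp t"
    obtain M where M: "\<And>N. (\<Sum>j\<in>{M..<N}. x ^ j / fact j) \<le> 1"
      using exp_tail_small[of 1 x] by auto
    have evb: "eventually (\<lambda>n. \<beta>s n < 2 * \<beta>) sequentially"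
      using conv_\<beta> \<beta> by (intro order_tendstoD) auto
    have "eventually (\<lambda>n. \<beta>s n \<le> (\<Sum>k\<le>I+1. \<alpha>s n k * (\<Sum>j<M. real j * \<rho> n k j)) + (I + 2) * \<epsilon>) sequentially"
      using evb
    proof eventually_elim
      case (elim n)
      have one: "\<alpha>s n k * m n k \<le> \<alpha>s n k * (\<Sum>j<M. real j * \<pi>s n k j) + \<epsilon>" if k: "k \<in> Kn n" for k
      proof -
        have smk: "summable (\<lambda>j. real j * \<pi>s n k j)" using pd(2)[OF k] .
        interpret pdist "\<pi>s n k" "P n" by (rule pdn[OF k])
        have T: "(\<Sum>j\<in>{M..<N}. P n j * exp (t * j)) \<le> 1" for N
        proof -
          have "(\<Sum>j\<in>{M..<N}. P n j * exp (t * j)) \<le> (\<Sum>j\<in>{M..<N}. x ^ j / fact j)"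
            unfolding P_def x_def using elim \<beta>n[of n]
            by (intro sum_mono poisson_exp_le) auto
          then show ?thesis using M[of N] by simp
        qed
        have mb: "m n k \<le> (\<Sum>j<M. real j * \<pi>s n k j) + (Dn n k + 1) / t"
          unfolding m_def Dn_def by (rule mean_bound[OF smk t T]) auto
        have ak: "0 \<le> \<alpha>s n k" "\<alpha>s n k \<le> 1" using an0[of k n] k by (auto simp: Kn_def)
        have "\<alpha>s n k * m n k \<le> \<alpha>s n k * ((\<Sum>j<M. real j * \<pi>s n k j) + (Dn n k + 1) / t)"
          using mb ak by (intro mult_left_mono) auto
        also have "\<dots> = \<alpha>s n k * (\<Sum>j<M. real j * \<pi>s n k j) + (\<alpha>s n k * Dn n k + \<alpha>s n k) / t"
          by (simp add: algebra_simps add_divide_distrib)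
        also have "(\<alpha>s n k * Dn n k + \<alpha>s n k) / t \<le> (\<bar>L\<bar> + 1) / t"
          using aD_le[OF k] ak t by (intro divide_right_mono) auto
        also have "(\<bar>L\<bar> + 1) / t = \<epsilon>" using \<epsilon> by (simp add: t_def)
        finally show ?thesis by simp
      qed
      have "\<beta>s n = (\<Sum>k\<in>Kn n. \<alpha>s n k * m n k)" using mean by simp
      also have "\<dots> \<le> (\<Sum>k\<in>Kn n. \<alpha>s n k * (\<Sum>j<M. real j * \<pi>s n k j) + \<epsilon>)"
        using one by (intro sum_mono) auto
      also have "\<dots> = (\<Sum>k\<le>I+1. \<alpha>s n k * (\<Sum>j<M. real j * \<rho> n k j)) + card (Kn n) * \<epsilon>"
        using sumKn by (simp add: sum.distrib)
      also have "card (Kn n) * \<epsilon> \<le> (I + 2) * \<epsilon>"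
      proof -
        have "card (Kn n) \<le> card {..I+1}" by (intro card_mono) (auto simp: Kn_def)
        then show ?thesis using \<epsilon> by (intro mult_right_mono) auto
      qed
      finally show ?case by simp
    qed
    moreover have "(\<lambda>n. (\<Sum>k\<le>I+1. \<alpha>s n k * (\<Sum>j<M. real j * \<rho> n k j)) + (I + 2) * \<epsilon>)
        \<longlonglongrightarrow> (\<Sum>k\<in>K. \<alpha> k * (\<Sum>j<M. real j * \<pi> k j)) + (I + 2) * \<epsilon>"
      by (intro tendsto_intros limM)
    ultimately have "\<beta> \<le> (\<Sum>k\<in>K. \<alpha> k * (\<Sum>j<M. real j * \<pi> k j)) + (I + 2) * \<epsilon>"
      using conv_\<beta> by (intro tendsto_le[OF _ _ conv_\<beta>]) auto
    also have "(\<Sum>k\<in>K. \<alpha> k * (\<Sum>j<M. real j * \<pi> k j)) \<le> S"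
      unfolding S_def
    proof (intro sum_mono mult_left_mono)
      fix k assume k: "k \<in> K"
      show "(\<Sum>j<M. real j * \<pi> k j) \<le> (\<Sum>j. real j * \<pi> k j)"
        using msum[OF k] \<pi>0 k by (intro sum_le_suminf) (auto simp: K_def)
      show "0 \<le> \<alpha> k" using k by (simp add: K_def)
    qed
    also have "(I + 2) * \<epsilon> = e" by (simp add: \<epsilon>_def)
    finally show "\<beta> \<le> S + e" by simp
  qed
  define Pl where "Pl = poisson \<beta>"
  define hl where "hl k j = Fe (\<pi> k j) (Pl j) - \<pi> k j + Pl j" for k j
  have Plpos: "0 < Pl j" for j using \<beta> by (simp add: Pl_def poisson_pos)
  have hl0: "0 \<le> hl k j" if "k \<le> I+1" for k j
    using Fe_lower0[OF \<pi>0[OF that, of j] Plpos[of j]] by (simp add: hl_def)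
  have P_conv: "(\<lambda>n. P n j) \<longlonglongrightarrow> Pl j" for j
    unfolding P_def Pl_def poisson_def by (intro tendsto_intros conv_\<beta>) simp
  have hl_partial: "(\<Sum>k\<in>K. \<alpha> k * (\<Sum>j<M. hl k j)) \<le> L" for M
  proof -
    have "eventually (\<lambda>n. (\<Sum>k\<in>K. \<alpha>s n k * (\<Sum>j<M. Fe (\<rho> n k j) (P n j) - \<rho> n k j + P n j)) \<le> L) sequentially"
      using evK
    proof eventually_elim
      case (elim n)
      have "(\<Sum>k\<in>K. \<alpha>s n k * (\<Sum>j<M. Fe (\<rho> n k j) (P n j) - \<rho> n k j + P n j)) \<le> (\<Sum>k\<in>K. \<alpha>s n k * Dn n k)"
      proof (intro sum_mono mult_left_mono)
        fix k assume k: "k \<in> K"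
        then have kn: "k \<in> Kn n" using elim by auto
        interpret pdist "\<pi>s n k" "P n" by (rule pdn[OF kn])
        have "(\<Sum>j<M. Fe (\<rho> n k j) (P n j) - \<rho> n k j + P n j) = (\<Sum>j<M. h j)"
          using kn by (simp add: h_def \<rho>_def Kn_def)
        also have "\<dots> \<le> Dn n k" using h_partial by (simp add: Dn_def)
        finally show "(\<Sum>j<M. Fe (\<rho> n k j) (P n j) - \<rho> n k j + P n j) \<le> Dn n k" .
        show "0 \<le> \<alpha>s n k" using kn an0 by (auto simp: Kn_def)
      qed
      also have "\<dots> \<le> (\<Sum>k\<in>Kn n. \<alpha>s n k * Dn n k)"
        using elim finKn Dn0 an0 by (intro sum_mono2) (auto simp: Kn_def)
      also have "\<dots> \<le> L" using costn(2)[of n] by simp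
      finally show ?case .
    qed
    moreover have "(\<lambda>n. (\<Sum>k\<in>K. \<alpha>s n k * (\<Sum>j<M. Fe (\<rho> n k j) (P n j) - \<rho> n k j + P n j)))
       \<longlonglongrightarrow> (\<Sum>k\<in>K. \<alpha> k * (\<Sum>j<M. hl k j))"
      unfolding hl_def
      by (intro tendsto_intros conv_\<alpha> \<rho>_conv P_conv Fe_tendsto \<rho>0 Plpos) (auto simp: K_def)
    ultimately show ?thesis by (intro tendsto_upperbound) auto
  qed
  have hl_bd: "(\<Sum>j<M. hl k j) \<le> L / \<alpha> k" if k: "k \<in> K" for k M
  proof -
    have "\<alpha> k * (\<Sum>j<M. hl k j) \<le> (\<Sum>k\<in>K. \<alpha> k * (\<Sum>j<M. hl k j))"
      using k finK hl0 by (intro member_le_sum) (auto simp: K_def intro!: sum_nonneg mult_nonneg_nonneg)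
    then have "\<alpha> k * (\<Sum>j<M. hl k j) \<le> L" using hl_partial[of M] by simp
    then show ?thesis using k by (simp add: K_def field_simps)
  qed
  have hl_sum: "summable (hl k)" if k: "k \<in> K" for k
    using k hl0 hl_bd by (intro summableI_nonneg_bounded) (auto simp: K_def)
  have Fe_sums: "(\<lambda>j. Fe (\<pi> k j) (Pl j)) sums (\<Sum>j. hl k j)" if k: "k \<in> K" for k
  proof -
    have "(\<lambda>j. hl k j + \<pi> k j - Pl j) sums ((\<Sum>j. hl k j) + 1 - 1)"
      using pdist_lim[OF k] by (intro sums_add sums_diff summable_sums hl_sum k poisson_sums)
        (auto simp: prob_dist_def Pl_def poisson_sums)
    then show ?thesis by (simp add: hl_def)
  qed
  have cost_le: "(\<Sum>k\<in>K. \<alpha> k * (\<Sum>j. hl k j)) \<le> L"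
  proof -
    have "(\<lambda>M. \<Sum>k\<in>K. \<alpha> k * (\<Sum>j<M. hl k j)) \<longlonglongrightarrow> (\<Sum>k\<in>K. \<alpha> k * (\<Sum>j. hl k j))"
      by (intro tendsto_intros summable_LIMSEQ hl_sum)
    then show ?thesis using hl_partial by (intro LIMSEQ_le_const2) auto
  qed
  have val: "(\<Sum>k\<in>K. ereal (\<alpha> k) * relent (\<pi> k) (poisson \<beta>)) = ereal (\<Sum>k\<in>K. \<alpha> k * (\<Sum>j. hl k j))"
  proof -
    have "(\<Sum>k\<in>K. ereal (\<alpha> k) * relent (\<pi> k) (poisson \<beta>)) = (\<Sum>k\<in>K. ereal (\<alpha> k * (\<Sum>j. hl k j)))"
    proof (intro sum.cong refl)
      fix k assume k: "k \<in> K"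
      have "summable (\<lambda>j. Fe (\<pi> k j) (poisson \<beta> j))" "(\<Sum>j. Fe (\<pi> k j) (poisson \<beta> j)) = (\<Sum>j. hl k j)"
        using Fe_sums[OF k] by (auto simp: Pl_def sums_iff)
      then show "ereal (\<alpha> k) * relent (\<pi> k) (poisson \<beta>) = ereal (\<alpha> k * (\<Sum>j. hl k j))"
        by (simp add: relent_alt)
    qed
    then show ?thesis by simp
  qed
  have inS: "(\<forall>k\<in>K. prob_dist (\<pi> k) \<and> summable (\<lambda>j. real j * \<pi> k j)) \<and>
              (\<Sum>k\<in>K. \<alpha> k * (\<Sum>j. real j * \<pi> k j)) = \<beta> \<and>
              (\<forall>i\<le>I. \<omega> i = (\<Sum>k\<in>{k\<in>K. k \<le> i}. \<alpha> k * \<pi> k (i - k)))"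
    using pdist_lim msum S_le S_ge omega_eq by (auto simp: S_def)
  have "Jfun I \<alpha> \<omega> \<beta> \<le> (\<Sum>k\<in>K. ereal (\<alpha> k) * relent (\<pi> k) (poisson \<beta>))"
    unfolding Jfun_def Let_def if_P[OF feas]
    by (rule Inf_lower) (use inS in \<open>unfold K_def, blast\<close>)
  also have "\<dots> \<le> ereal L" using val cost_le by simp
  finally show ?thesis .
qed

lemma approx:
  fixes I :: nat and \<alpha>s \<omega>s :: "nat \<Rightarrow> nat \<Rightarrow> real" and \<beta>s :: "nat \<Rightarrow> real"
    and \<alpha> \<omega> :: "nat \<Rightarrow> real" and \<beta> L :: real
  assumes feas_n: "\<And>n. feasible I (\<alpha>s n) (\<omega>s n) (\<beta>s n)"
    and feas: "feasible I \<alpha> \<omega> \<beta>"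
    and conv_\<alpha>: "\<And>j. j \<le> I + 1 \<Longrightarrow> (\<lambda>n. \<alpha>s n j) \<longlonglongrightarrow> \<alpha> j"
    and conv_\<omega>: "\<And>j. j \<le> I + 1 \<Longrightarrow> (\<lambda>n. \<omega>s n j) \<longlonglongrightarrow> \<omega> j"
    and conv_\<beta>: "\<beta>s \<longlonglongrightarrow> \<beta>"
    and lt: "\<And>n. Jfun I (\<alpha>s n) (\<omega>s n) (\<beta>s n) < ereal L"
  shows "Jfun I \<alpha> \<omega> \<beta> \<le> ereal L"
proof -
  define C where "C n \<pi> \<longleftrightarrow>
     (\<forall>k\<in>{k. k \<le> I+1 \<and> \<alpha>s n k > 0}. prob_dist (\<pi> k) \<and> summable (\<lambda>j. real j * \<pi> k j)) \<and>
     (\<Sum>k\<in>{k. k \<le> I+1 \<and> \<alpha>s n k > 0}. \<alpha>s n k * (\<Sum>j. real j * \<pi> k j)) = \<beta>s n \<and>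
     (\<forall>i\<le>I. \<omega>s n i = (\<Sum>k\<in>{k\<in>{k. k \<le> I+1 \<and> \<alpha>s n k > 0}. k \<le> i}. \<alpha>s n k * \<pi> k (i - k)))"
    for n and \<pi> :: "nat \<Rightarrow> nat \<Rightarrow> real"
  define V where "V n \<pi> = (\<Sum>k\<in>{k. k \<le> I+1 \<and> \<alpha>s n k > 0}. ereal (\<alpha>s n k) * relent (\<pi> k) (poisson (\<beta>s n)))"
    for n and \<pi> :: "nat \<Rightarrow> nat \<Rightarrow> real"
  have "\<exists>\<pi>. C n \<pi> \<and> V n \<pi> < ereal L" for n
  proof -
    have "Inf {V n \<pi> | \<pi>. C n \<pi>} < ereal L"
      using lt[of n] unfolding Jfun_def Let_def if_P[OF feas_n] C_def V_def .
    then show ?thesis unfolding Inf_less_iff by blast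
  qed
  then obtain \<pi>s where \<pi>s: "\<And>n. C n (\<pi>s n) \<and> V n (\<pi>s n) < ereal L" by metis
  define f where "f n m = (let k = fst (prod_decode m); j = snd (prod_decode m) in
      if 0 < \<alpha>s n k \<and> k \<le> I+1 then \<pi>s n k j else 0)" for n m
  have "\<bar>f n m\<bar> \<le> 1" for n m
  proof -
    obtain k j where kj: "prod_decode m = (k, j)" by (cases "prod_decode m")
    show ?thesis
    proof (cases "0 < \<alpha>s n k \<and> k \<le> I+1")
      case True
      then have "prob_dist (\<pi>s n k)" using \<pi>s[of n] by (auto simp: C_def)
      then have "0 \<le> \<pi>s n k j" "\<pi>s n k j \<le> 1" using prob_le1 by (auto simp: prob_dist_def)
      then show ?thesis using True kj by (simp add: f_def)
    qed (auto simp: f_def kj)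
  qed
  then obtain d where d: "strict_mono d" "\<And>m. convergent (\<lambda>i. f (d i) m)"
    using diag_extract[of f 1] by blast
  define \<pi> where "\<pi> k j = lim (\<lambda>i. f (d i) (prod_encode (k, j)))" for k j
  have cr: "(\<lambda>i. f (d i) (prod_encode (k, j))) \<longlonglongrightarrow> \<pi> k j" for k j
    unfolding \<pi>_def using d(2) by (simp add: convergent_LIMSEQ_iff)
  have sub: "(\<lambda>n. X (d n)) \<longlonglongrightarrow> y" if "X \<longlonglongrightarrow> y" for X :: "nat \<Rightarrow> real" and y
    using LIMSEQ_subseq_LIMSEQ[OF that d(1)] by (simp add: comp_def)
  show ?thesis
  proof (rule core[of I "\<lambda>n. \<alpha>s (d n)" "\<lambda>n. \<omega>s (d n)" "\<lambda>n. \<beta>s (d n)" \<alpha> \<omega> \<beta> "\<lambda>n. \<pi>s (d n)" L \<pi>])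
    show "feasible I (\<alpha>s (d n)) (\<omega>s (d n)) (\<beta>s (d n))" for n by (rule feas_n)
    show "feasible I \<alpha> \<omega> \<beta>" by (rule feas)
    show "(\<lambda>n. \<alpha>s (d n) j) \<longlonglongrightarrow> \<alpha> j" if "j \<le> I+1" for j using sub[OF conv_\<alpha>[OF that]] .
    show "(\<lambda>n. \<omega>s (d n) j) \<longlonglongrightarrow> \<omega> j" if "j \<le> I+1" for j using sub[OF conv_\<omega>[OF that]] .
    show "(\<lambda>n. \<beta>s (d n)) \<longlonglongrightarrow> \<beta>" using sub[OF conv_\<beta>] .
    show "prob_dist (\<pi>s (d n) k) \<and> summable (\<lambda>j. real j * \<pi>s (d n) k j)" if "k \<le> I+1" "0 < \<alpha>s (d n) k" for n k
      using \<pi>s[of "d n"] that by (auto simp: C_def)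
    show "(\<Sum>k\<in>{k. k \<le> I+1 \<and> \<alpha>s (d n) k > 0}. \<alpha>s (d n) k * (\<Sum>j. real j * \<pi>s (d n) k j)) = \<beta>s (d n)" for n
      using \<pi>s[of "d n"] by (simp add: C_def)
    show "\<omega>s (d n) i = (\<Sum>k\<in>{k\<in>{k. k \<le> I+1 \<and> \<alpha>s (d n) k > 0}. k \<le> i}. \<alpha>s (d n) k * \<pi>s (d n) k (i - k))"
      if "i \<le> I" for n i
      using \<pi>s[of "d n"] that by (simp add: C_def)
    show "(\<Sum>k\<in>{k. k \<le> I+1 \<and> \<alpha>s (d n) k > 0}. ereal (\<alpha>s (d n) k) * relent (\<pi>s (d n) k) (poisson (\<beta>s (d n)))) < ereal L" for n
      using \<pi>s[of "d n"] by (simp add: V_def)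
    show "(\<lambda>n. if 0 < \<alpha>s (d n) k then \<pi>s (d n) k j else 0) \<longlonglongrightarrow> \<pi> k j" if "k \<le> I+1" for k j
      using cr[of k j] that by (simp add: f_def)
  qed
qed

theorem corollaryA7:
  fixes I :: nat
    and \<alpha>s \<omega>s :: "nat \<Rightarrow> nat \<Rightarrow> real" and \<beta>s :: "nat \<Rightarrow> real"
    and \<alpha> \<omega> :: "nat \<Rightarrow> real" and \<beta> :: real
  assumes "\<And>n. feasible I (\<alpha>s n) (\<omega>s n) (\<beta>s n)"
    and "feasible I \<alpha> \<omega> \<beta>"
    and "\<And>j. j \<le> I + 1 \<Longrightarrow> (\<lambda>n. \<alpha>s n j) \<longlonglongrightarrow> \<alpha> j"
    and "\<And>j. j \<le> I + 1 \<Longrightarrow> (\<lambda>n. \<omega>s n j) \<longlonglongrightarrow> \<omega> j"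
    and "\<beta>s \<longlonglongrightarrow> \<beta>"
    and "0 < \<beta>"
  shows "Liminf sequentially (\<lambda>n. Jfun I (\<alpha>s n) (\<omega>s n) (\<beta>s n)) \<ge> Jfun I \<alpha> \<omega> \<beta>"
  unfolding le_Liminf_iff
proof (intro allI impI, rule ccontr)
  fix y assume y: "y < Jfun I \<alpha> \<omega> \<beta>"
    and ne: "\<not> eventually (\<lambda>n. y < Jfun I (\<alpha>s n) (\<omega>s n) (\<beta>s n)) sequentially"
  obtain L where L: "y < ereal L" "ereal L < Jfun I \<alpha> \<omega> \<beta>" using ereal_dense2[OF y] by blast
  have "frequently (\<lambda>n. Jfun I (\<alpha>s n) (\<omega>s n) (\<beta>s n) \<le> y) sequentially"
    using ne by (simp add: not_eventually not_less)
  then have "infinite {n. Jfun I (\<alpha>s n) (\<omega>s n) (\<beta>s n) \<le> y}"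
    by (simp add: frequently_cofinite[symmetric] cofinite_eq_sequentially)
  then obtain r :: "nat \<Rightarrow> nat" where r: "strict_mono r" "\<And>n. Jfun I (\<alpha>s (r n)) (\<omega>s (r n)) (\<beta>s (r n)) \<le> y"
    using infinite_enumerate by blast
  have sub: "(\<lambda>n. X (r n)) \<longlonglongrightarrow> z" if "X \<longlonglongrightarrow> z" for X :: "nat \<Rightarrow> real" and z
    using LIMSEQ_subseq_LIMSEQ[OF that r(1)] by (simp add: comp_def)
  have "Jfun I \<alpha> \<omega> \<beta> \<le> ereal L"
  proof (rule approx[of I "\<lambda>n. \<alpha>s (r n)" "\<lambda>n. \<omega>s (r n)" "\<lambda>n. \<beta>s (r n)"])
    show "feasible I (\<alpha>s (r n)) (\<omega>s (r n)) (\<beta>s (r n))" for n by (rule assms(1))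
    show "feasible I \<alpha> \<omega> \<beta>" by (rule assms(2))
    show "(\<lambda>n. \<alpha>s (r n) j) \<longlonglongrightarrow> \<alpha> j" if "j \<le> I+1" for j using sub[OF assms(3)[OF that]] .
    show "(\<lambda>n. \<omega>s (r n) j) \<longlonglongrightarrow> \<omega> j" if "j \<le> I+1" for j using sub[OF assms(4)[OF that]] .
    show "(\<lambda>n. \<beta>s (r n)) \<longlonglongrightarrow> \<beta>" using sub[OF assms(5)] .
    show "Jfun I (\<alpha>s (r n)) (\<omega>s (r n)) (\<beta>s (r n)) < ereal L" for n
      using r(2)[of n] L(1) by (rule le_less_trans)
  qed
  then show False using L(2) by simp
qed

end
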